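(* Let $\beta\in(0,1)$, let $U_1\ge U_2\ge\dots\ge U_K$ be real numbers in $[0,1]$, and let $L\in\mathbb N$ be even. For a sequence $\mathbf A=(A_0,\dots,A_{L-1})\in[K]^L$ let $V(\mathbf A)=\sum_{s=0}^{L-1}\beta^sU_{A_s}$, and for a permutation $\sigma$ of $\{0,\dots,L-1\}$ let $V(\sigma,\mathbf A)=\sum_{s=0}^{L-1}\beta^sU_{A_{\sigma(s)}}$ (the value of the reordered sequence). Then for every $\mathbf A\in[K]^L$, $$\max_{\sigma}V(\sigma,\mathbf A)\le V(\mathbf A)+\frac{(1-\beta^L)^2}{1-\beta},$$ the maximum being over all permutations (reorderings) of $\mathbf A$.
   Context: In the paper, $U_k=u^i(a^i_k,w^{-i})$ is the expected stage utility of action $a^i_k$ of player $i$ against a fixed opponents' mixed profile, with utilities valued in $[0,1]$ and actions indexed so that $U_1\ge\dots\ge U_K$. *)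

theory Defs
  imports "HOL-Analysis.Analysis" "HOL-Combinatorics.Permutations"
begin

definition seq_value :: "real \<Rightarrow> (nat \<Rightarrow> real) \<Rightarrow> nat \<Rightarrow> (nat \<Rightarrow> nat) \<Rightarrow> real" where
  "seq_value \<beta> U L A = (\<Sum>s<L. \<beta> ^ s * U (A s))"

definition perm_value :: "real \<Rightarrow> (nat \<Rightarrow> real) \<Rightarrow> nat \<Rightarrow> (nat \<Rightarrow> nat) \<Rightarrow> (nat \<Rightarrow> nat) \<Rightarrow> real" where
  "perm_value \<beta> U L \<sigma> A = (\<Sum>s<L. \<beta> ^ s * U (A (\<sigma> s)))"

end

theory Submission
  imports Defs
begin

theorem mainTheorem12:
  fixes \<beta> :: real and U :: "nat \<Rightarrow> real" and K L :: nat and A :: "nat \<Rightarrow> nat"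
  assumes "0 < \<beta>" and "\<beta> < 1"
    and "\<And>k. k \<in> {1..K} \<Longrightarrow> 0 \<le> U k \<and> U k \<le> 1"
    and "\<And>j k. 1 \<le> j \<Longrightarrow> j \<le> k \<Longrightarrow> k \<le> K \<Longrightarrow> U k \<le> U j"
    and "even L"
    and "\<And>s. s < L \<Longrightarrow> A s \<in> {1..K}"
  shows "Max ((\<lambda>\<sigma>. perm_value \<beta> U L \<sigma> A) ` {\<sigma>. \<sigma> permutes {..<L}})
           \<le> seq_value \<beta> U L A + (1 - \<beta> ^ L)\<^sup>2 / (1 - \<beta>)"
proof -
  have fin: "finite {\<sigma>. \<sigma> permutes {..<L::nat}}" by (rule finite_permutations) simp
  have ne: "{\<sigma>. \<sigma> permutes {..<L::nat}} \<noteq> {}" using permutes_id by blast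
  define G where "G = (\<Sum>s<L. \<beta> ^ s)"
  have G1: "G \<le> real L"
  proof -
    have "G \<le> (\<Sum>s<L. (1::real))" unfolding G_def
      by (intro sum_mono) (use assms(1,2) in \<open>auto intro: power_le_one\<close>)
    then show ?thesis by simp
  qed
  have G2: "(1 - \<beta> ^ L) / (1 - \<beta>) = G" unfolding G_def
    using sum_gp_strict[of \<beta> L] assms(2) by simp
  have rhs: "(1 - \<beta> ^ L)\<^sup>2 / (1 - \<beta>) = (1 - \<beta> ^ L) * G"
    using G2[symmetric] by (simp add: power2_eq_square times_divide_eq_right)
  have bnd: "perm_value \<beta> U L \<sigma> A - seq_value \<beta> U L A \<le> (1 - \<beta> ^ L)\<^sup>2 / (1 - \<beta>)"
    if sp: "\<sigma> permutes {..<L}" for \<sigma>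
  proof -
    let ?x = "\<lambda>s. U (A s)"
    have perm: "(\<Sum>s<L. ?x (\<sigma> s)) = (\<Sum>s<L. ?x s)"
      using sum.permute[OF sp, of ?x] by (simp add: comp_def)
    have "perm_value \<beta> U L \<sigma> A - seq_value \<beta> U L A
        = (\<Sum>s<L. \<beta>^s * (?x (\<sigma> s) - ?x s))"
      unfolding perm_value_def seq_value_def by (simp add: sum_subtractf algebra_simps)
    also have "\<dots> = (\<Sum>s<L. (\<beta>^s - \<beta>^L) * (?x (\<sigma> s) - ?x s)) + \<beta>^L * ((\<Sum>s<L. ?x (\<sigma> s)) - (\<Sum>s<L. ?x s))"
      by (simp add: sum_subtractf sum_distrib_left algebra_simps sum.distrib)
    also have "\<dots> = (\<Sum>s<L. (\<beta>^s - \<beta>^L) * (?x (\<sigma> s) - ?x s))" using perm by simp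
    also have "\<dots> \<le> (\<Sum>s<L. (\<beta>^s - \<beta>^L) * 1)"
    proof (intro sum_mono)
      fix s assume s: "s \<in> {..<L}"
      have "\<sigma> s < L" using permutes_in_image[OF sp] s by auto
      then have "?x (\<sigma> s) \<le> 1" using assms(3,6) by blast
      moreover have "0 \<le> ?x s" using assms(3,6) s by blast
      moreover have "\<beta>^L \<le> \<beta>^s" using s assms(1,2) by (intro power_decreasing) auto
      ultimately show "(\<beta>^s - \<beta>^L) * (?x (\<sigma> s) - ?x s) \<le> (\<beta>^s - \<beta>^L) * 1"
        by (intro mult_left_mono) auto
    qed
    also have "\<dots> = G - real L * \<beta>^L" unfolding G_def by (simp add: sum_subtractf)
    also have "\<dots> \<le> G - \<beta>^L * G"
      using G1 assms(1) by (simp add: mult_left_mono mult.commute)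
    also have "\<dots> = (1 - \<beta> ^ L)\<^sup>2 / (1 - \<beta>)" using rhs by (simp add: algebra_simps)
    finally show ?thesis .
  qed
  show ?thesis
    using fin ne bnd by (subst Max_le_iff) (auto simp: algebra_simps)
qed

end
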